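(* Let $C\subseteq[n]$ be a nonempty proper subset and let $\ket{\psi}=\ket{a}_C\otimes\ket{b}_{\overline{C}}$ be an $n$-qubit state, where $\ket{a}_C$ and $\ket{b}_{\overline{C}}$ are each $\epsilon$-far from every multipartite product state. There is an algorithm (not necessarily time-efficient) which, given $m=O(n/\epsilon^2)$ copies of $\ket{\psi}$, identifies the cut $C$ (i.e. outputs $C$ or $\overline{C}$) with probability at least $99\%$.
   Context: A state on a set $Q$ of qubits is multipartite product if it equals $\ket{a'}_D\otimes\ket{b'}_{Q\setminus D}$ for some nonempty proper $D\subsetneq Q$; a pure state $\ket{\phi}$ is $\epsilon$-far from a set $\mathcal{P}$ if $|\langle\phi|\chi\rangle|^2\le1-\epsilon^2$ for all $\ket{\chi}\in\mathcal{P}$. $\overline{C}=[n]\setminus C$. *)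

theory Defs
  imports "HOL-Analysis.Analysis"
begin

text \<open>The computational basis of Q is
indexed by subsets x of Q (x = set of qubits in state 1). A state is a function
from basis labels to amplitudes; only its values on Pow Q matter.\<close>

definition qinner :: "nat set \<Rightarrow> (nat set \<Rightarrow> complex) \<Rightarrow> (nat set \<Rightarrow> complex) \<Rightarrow> complex" where
  "qinner Q \<phi> \<xi> = (\<Sum>x\<in>Pow Q. cnj (\<phi> x) * \<xi> x)"

definition qstate :: "nat set \<Rightarrow> (nat set \<Rightarrow> complex) \<Rightarrow> bool" where
  "qstate Q \<phi> \<longleftrightarrow> (\<Sum>x\<in>Pow Q. (cmod (\<phi> x))\<^sup>2) = 1"

definition qtensor :: "nat set \<Rightarrow> nat set \<Rightarrow> (nat set \<Rightarrow> complex) \<Rightarrow> (nat set \<Rightarrow> complex) \<Rightarrow> (nat set \<Rightarrow> complex)" where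
  "qtensor D E a b = (\<lambda>x. a (x \<inter> D) * b (x \<inter> E))"

definition mp_product :: "nat set \<Rightarrow> (nat set \<Rightarrow> complex) \<Rightarrow> bool" where
  "mp_product Q \<xi> \<longleftrightarrow> (\<exists>D a' b'. D \<noteq> {} \<and> D \<subset> Q \<and> qstate D a' \<and> qstate (Q - D) b' \<and>
      (\<forall>x\<in>Pow Q. \<xi> x = qtensor D (Q - D) a' b' x))"

definition eps_far_mp :: "nat set \<Rightarrow> real \<Rightarrow> (nat set \<Rightarrow> complex) \<Rightarrow> bool" where
  "eps_far_mp Q \<epsilon> \<phi> \<longleftrightarrow> (\<forall>\<xi>. qstate Q \<xi> \<and> mp_product Q \<xi> \<longrightarrow> (cmod (qinner Q \<phi> \<xi>))\<^sup>2 \<le> 1 - \<epsilon>\<^sup>2)"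

definition copies_basis :: "nat \<Rightarrow> nat \<Rightarrow> nat set list set" where
  "copies_basis n m = {xs. length xs = m \<and> set xs \<subseteq> Pow {..<n}}"

definition tensor_pow :: "(nat set \<Rightarrow> complex) \<Rightarrow> nat set list \<Rightarrow> complex" where
  "tensor_pow \<psi> xs = prod_list (map \<psi> xs)"

definition qform :: "'b set \<Rightarrow> ('b \<Rightarrow> 'b \<Rightarrow> complex) \<Rightarrow> ('b \<Rightarrow> complex) \<Rightarrow> complex" where
  "qform B M v = (\<Sum>x\<in>B. \<Sum>y\<in>B. cnj (v x) * M x y * v y)"

definition psd_op :: "'b set \<Rightarrow> ('b \<Rightarrow> 'b \<Rightarrow> complex) \<Rightarrow> bool" where
  "psd_op B M \<longleftrightarrow> (\<forall>v. Im (qform B M v) = 0 \<and> 0 \<le> Re (qform B M v))"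

definition is_povm :: "'b set \<Rightarrow> 'oc set \<Rightarrow> ('oc \<Rightarrow> 'b \<Rightarrow> 'b \<Rightarrow> complex) \<Rightarrow> bool" where
  "is_povm B Out M \<longleftrightarrow> (\<forall>oc\<in>Out. psd_op B (M oc)) \<and>
     (\<forall>x\<in>B. \<forall>y\<in>B. (\<Sum>oc\<in>Out. M oc x y) = (if x = y then 1 else 0))"

end

theory Submission
  imports Defs
begin


lemma pow_split_sum:
  assumes "finite Q" "T \<subseteq> Q"
  shows "(\<Sum>x\<in>Pow Q. f x) = (\<Sum>u\<in>Pow T. \<Sum>w\<in>Pow (Q - T). f (u \<union> w))"
proof -
  have inj: "inj_on (\<lambda>(u,w). u \<union> w) (Pow T \<times> Pow (Q - T))"
  proof (rule inj_onI, clarify)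
    fix u w u' w' assume "u \<subseteq> T" "w \<subseteq> Q - T" "u' \<subseteq> T" "w' \<subseteq> Q - T" "u \<union> w = u' \<union> w'"
    then show "u = u' \<and> w = w'" by blast
  qed
  have img: "(\<lambda>(u,w). u \<union> w) ` (Pow T \<times> Pow (Q - T)) = Pow Q"
  proof
    show "(\<lambda>(u,w). u \<union> w) ` (Pow T \<times> Pow (Q - T)) \<subseteq> Pow Q" using assms by auto
    show "Pow Q \<subseteq> (\<lambda>(u,w). u \<union> w) ` (Pow T \<times> Pow (Q - T))"
    proof
      fix x assume "x \<in> Pow Q"
      then have "x = (\<lambda>(u,w). u \<union> w) (x \<inter> T, x - T)" "(x \<inter> T, x - T) \<in> Pow T \<times> Pow (Q - T)" by auto
      then show "x \<in> (\<lambda>(u,w). u \<union> w) ` (Pow T \<times> Pow (Q - T))" by blast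
    qed
  qed
  have "(\<Sum>x\<in>Pow Q. f x) = (\<Sum>p\<in>Pow T \<times> Pow (Q - T). f ((\<lambda>(u,w). u \<union> w) p))"
    using sum.reindex[OF inj, of f] img by simp
  also have "\<dots> = (\<Sum>(u,w)\<in>Pow T \<times> Pow (Q - T). f (u \<union> w))"
    by (simp add: case_prod_unfold)
  also have "\<dots> = (\<Sum>u\<in>Pow T. \<Sum>w\<in>Pow (Q - T). f (u \<union> w))"
    by (rule sum.cartesian_product[symmetric])
  finally show ?thesis .
qed

definition sw :: "nat set \<Rightarrow> nat set \<Rightarrow> nat set \<Rightarrow> nat set" where
  "sw T x y = (x - T) \<union> (y \<inter> T)"

definition wq :: "nat set \<Rightarrow> nat set \<Rightarrow> (nat set \<Rightarrow> complex) \<Rightarrow> complex" where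
  "wq Q T a = (\<Sum>x\<in>Pow Q. \<Sum>y\<in>Pow Q. cnj (a x) * cnj (a y) * a (sw T x y) * a (sw T y x))"

lemma wq_purity:
  assumes "finite Q" "T \<subseteq> Q"
  shows "wq Q T a = (\<Sum>u\<in>Pow T. \<Sum>u'\<in>Pow T.
     of_real ((cmod (\<Sum>w\<in>Pow (Q - T). cnj (a (u \<union> w)) * a (u' \<union> w)))\<^sup>2))"
proof -
  have fT: "finite T" "finite (Q - T)" using assms finite_subset by auto
  have swe: "sw T (u \<union> w) (u' \<union> w') = u' \<union> w"
    if "u \<subseteq> T" "u' \<subseteq> T" "w \<subseteq> Q - T" "w' \<subseteq> Q - T" for u u' w w'
    using that unfolding sw_def by blast
  have "wq Q T a = (\<Sum>u\<in>Pow T. \<Sum>w\<in>Pow (Q - T). \<Sum>u'\<in>Pow T. \<Sum>w'\<in>Pow (Q - T).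
      cnj (a (u \<union> w)) * cnj (a (u' \<union> w')) * a (u' \<union> w) * a (u \<union> w'))"
    unfolding wq_def
    apply (subst pow_split_sum[OF assms, of "\<lambda>x. \<Sum>y\<in>Pow Q. cnj (a x) * cnj (a y) * a (sw T x y) * a (sw T y x)"])
    apply (rule sum.cong[OF refl])+
    subgoal for u w
      apply (subst pow_split_sum[OF assms, of "\<lambda>y. cnj (a (u \<union> w)) * cnj (a y) * a (sw T (u \<union> w) y) * a (sw T y (u \<union> w))"])
      apply (intro sum.cong refl)
      apply (simp add: swe)
      done
    done
  also have "\<dots> = (\<Sum>u\<in>Pow T. \<Sum>u'\<in>Pow T. \<Sum>w\<in>Pow (Q - T). \<Sum>w'\<in>Pow (Q - T).
      cnj (a (u \<union> w)) * cnj (a (u' \<union> w')) * a (u' \<union> w) * a (u \<union> w'))"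
    by (intro sum.cong refl sum.swap)
  also have "\<dots> = (\<Sum>u\<in>Pow T. \<Sum>u'\<in>Pow T.
     of_real ((cmod (\<Sum>w\<in>Pow (Q - T). cnj (a (u \<union> w)) * a (u' \<union> w)))\<^sup>2))"
  proof (intro sum.cong refl)
    fix u u'
    have "of_real ((cmod (\<Sum>w\<in>Pow (Q - T). cnj (a (u \<union> w)) * a (u' \<union> w)))\<^sup>2)
       = (\<Sum>w\<in>Pow (Q - T). cnj (a (u \<union> w)) * a (u' \<union> w)) * cnj (\<Sum>w\<in>Pow (Q - T). cnj (a (u \<union> w)) * a (u' \<union> w))"
      by (rule complex_norm_square)
    also have "\<dots> = (\<Sum>w\<in>Pow (Q - T). \<Sum>w'\<in>Pow (Q - T).
      cnj (a (u \<union> w)) * cnj (a (u' \<union> w')) * a (u' \<union> w) * a (u \<union> w'))"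
      apply (simp add: sum_product sum_distrib_left sum_distrib_right mult_ac)
      apply (subst sum.swap)
      apply (simp add: mult_ac)
      done
    finally show "(\<Sum>w\<in>Pow (Q - T). \<Sum>w'\<in>Pow (Q - T).
      cnj (a (u \<union> w)) * cnj (a (u' \<union> w')) * a (u' \<union> w) * a (u \<union> w')) = 
      of_real ((cmod (\<Sum>w\<in>Pow (Q - T). cnj (a (u \<union> w)) * a (u' \<union> w)))\<^sup>2)" by simp
  qed
  finally show ?thesis .
qed


lemma mult_cnj_sq: "z * cnj z = (complex_of_real (cmod z))\<^sup>2"
  by (metis complex_norm_square of_real_power)

lemma cs_complex:
  "(cmod (\<Sum>i\<in>I. f i * g i))\<^sup>2 \<le> (\<Sum>i\<in>I. (cmod (f i))\<^sup>2) * (\<Sum>i\<in>I. (cmod (g i))\<^sup>2)"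
proof -
  have "cmod (\<Sum>i\<in>I. f i * g i) \<le> (\<Sum>i\<in>I. cmod (f i) * cmod (g i))"
    by (metis (no_types, lifting) norm_mult norm_sum sum.cong)
  then have "(cmod (\<Sum>i\<in>I. f i * g i))\<^sup>2 \<le> (\<Sum>i\<in>I. cmod (f i) * cmod (g i))\<^sup>2"
    by (simp add: power_mono)
  also have "\<dots> \<le> (\<Sum>i\<in>I. (cmod (f i))\<^sup>2) * (\<Sum>i\<in>I. (cmod (g i))\<^sup>2)"
    by (rule Cauchy_Schwarz_ineq_sum)
  finally show ?thesis .
qed

lemma norm_split:
  assumes "finite Q" "T \<subseteq> Q"
  shows "(\<Sum>x\<in>Pow Q. (cmod (a x))\<^sup>2) = (\<Sum>u\<in>Pow T. \<Sum>w\<in>Pow (Q - T). (cmod (a (u \<union> w)))\<^sup>2)"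
  by (rule pow_split_sum[OF assms])

lemma purity_bound:
  assumes Q: "finite Q" "T \<subseteq> Q" and nrm: "(\<Sum>x\<in>Pow Q. (cmod (a x))\<^sup>2) = 1"
   and hyp: "\<And>ch. (\<Sum>u\<in>Pow T. (cmod (\<Sum>w\<in>Pow (Q-T). cnj (a (u\<union>w)) * ch w))\<^sup>2)
               \<le> \<Lambda> * (\<Sum>w\<in>Pow (Q-T). (cmod (ch w))\<^sup>2)"
  shows "(\<Sum>u\<in>Pow T. \<Sum>u'\<in>Pow T. (cmod (\<Sum>w\<in>Pow (Q - T). cnj (a (u \<union> w)) * a (u' \<union> w)))\<^sup>2) \<le> \<Lambda>"
proof -
  have "(\<Sum>u\<in>Pow T. \<Sum>u'\<in>Pow T. (cmod (\<Sum>w\<in>Pow (Q - T). cnj (a (u \<union> w)) * a (u' \<union> w)))\<^sup>2)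
      = (\<Sum>u'\<in>Pow T. \<Sum>u\<in>Pow T. (cmod (\<Sum>w\<in>Pow (Q - T). cnj (a (u \<union> w)) * a (u' \<union> w)))\<^sup>2)"
    by (rule sum.swap)
  also have "\<dots> \<le> (\<Sum>u'\<in>Pow T. \<Lambda> * (\<Sum>w\<in>Pow (Q-T). (cmod (a (u' \<union> w)))\<^sup>2))"
    by (intro sum_mono hyp)
  also have "\<dots> = \<Lambda> * (\<Sum>x\<in>Pow Q. (cmod (a x))\<^sup>2)"
    by (simp add: norm_split[OF Q] sum_distrib_left)
  finally show ?thesis using nrm by simp
qed

lemma hyp_one:
  assumes Q: "finite Q" "T \<subseteq> Q" and nrm: "(\<Sum>x\<in>Pow Q. (cmod (a x))\<^sup>2) = 1"
  shows "(\<Sum>u\<in>Pow T. (cmod (\<Sum>w\<in>Pow (Q-T). cnj (a (u\<union>w)) * ch w))\<^sup>2)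
               \<le> 1 * (\<Sum>w\<in>Pow (Q-T). (cmod (ch w))\<^sup>2)"
proof -
  have "(\<Sum>u\<in>Pow T. (cmod (\<Sum>w\<in>Pow (Q-T). cnj (a (u\<union>w)) * ch w))\<^sup>2)
     \<le> (\<Sum>u\<in>Pow T. (\<Sum>w\<in>Pow (Q-T). (cmod (cnj (a (u\<union>w))))\<^sup>2) * (\<Sum>w\<in>Pow (Q-T). (cmod (ch w))\<^sup>2))"
    by (intro sum_mono cs_complex)
  also have "\<dots> = (\<Sum>x\<in>Pow Q. (cmod (a x))\<^sup>2) * (\<Sum>w\<in>Pow (Q-T). (cmod (ch w))\<^sup>2)"
    by (simp add: norm_split[OF Q] sum_distrib_right)
  finally show ?thesis using nrm by simp
qed

lemma hyp_far:
  assumes Q: "finite Q" "T \<noteq> {}" "T \<subset> Q" and nrm: "qstate Q a" and far: "eps_far_mp Q \<epsilon> a"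
    and eps: "\<epsilon> \<le> 1" "0 \<le> \<epsilon>"
  shows "(\<Sum>u\<in>Pow T. (cmod (\<Sum>w\<in>Pow (Q-T). cnj (a (u\<union>w)) * ch w))\<^sup>2)
               \<le> (1 - \<epsilon>\<^sup>2) * (\<Sum>w\<in>Pow (Q-T). (cmod (ch w))\<^sup>2)"
proof -
  have TQ: "T \<subseteq> Q" using Q by auto
  have fin: "finite (Pow T)" "finite (Pow (Q - T))" using Q finite_subset by auto
  define g where "g u = (\<Sum>w\<in>Pow (Q-T). cnj (a (u\<union>w)) * ch w)" for u
  define G where "G = (\<Sum>u\<in>Pow T. (cmod (g u))\<^sup>2)"
  define X where "X = (\<Sum>w\<in>Pow (Q-T). (cmod (ch w))\<^sup>2)"
  have G0: "G \<ge> 0" unfolding G_def by (simp add: sum_nonneg)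
  have X0: "X \<ge> 0" unfolding X_def by (simp add: sum_nonneg)
  have L0: "1 - \<epsilon>\<^sup>2 \<ge> 0"
    using eps power_le_one[of \<epsilon> 2] by simp
  have disj: "(u \<union> w) \<inter> T = u" "(u \<union> w) \<inter> (Q - T) = w"
    if "u \<in> Pow T" "w \<in> Pow (Q - T)" for u w using that by auto
  have "G \<le> (1 - \<epsilon>\<^sup>2) * X"
  proof (cases "G = 0 \<or> X = 0")
    case True
    moreover have "X = 0 \<Longrightarrow> G = 0"
    proof -
      assume "X = 0"
      then have "\<forall>w\<in>Pow (Q-T). (cmod (ch w))\<^sup>2 = 0"
        unfolding X_def using fin by (subst sum_nonneg_eq_0_iff[symmetric]) auto
      then have "\<forall>w\<in>Pow (Q-T). ch w = 0" by simp
      then have "\<And>u. g u = 0" unfolding g_def by simp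
      then show "G = 0" unfolding G_def by simp
    qed
    ultimately show ?thesis using L0 X0 by auto
  next
    case False
    then have Gp: "G > 0" and Xp: "X > 0" using G0 X0 by auto
    define phi where "phi u = cnj (g u) / of_real (sqrt G)" for u
    define ch' where "ch' w = ch w / of_real (sqrt X)" for w
    define xi where "xi = qtensor T (Q - T) phi ch'"
    have sG: "(sqrt G)\<^sup>2 = G" "(sqrt X)\<^sup>2 = X" using G0 X0 by auto
    have qphi: "qstate T phi"
      unfolding qstate_def phi_def using Gp
      by (simp add: norm_divide power_divide sum_divide_distrib[symmetric] G_def[symmetric] sG)
    have qch: "qstate (Q - T) ch'"
      unfolding qstate_def ch'_def using Xp
      by (simp add: norm_divide power_divide sum_divide_distrib[symmetric] X_def[symmetric] sG)
    have qxi: "qstate Q xi"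
    proof -
      have "(\<Sum>x\<in>Pow Q. (cmod (xi x))\<^sup>2) = (\<Sum>u\<in>Pow T. \<Sum>w\<in>Pow (Q - T). (cmod (xi (u \<union> w)))\<^sup>2)"
        by (rule pow_split_sum[OF Q(1) TQ])
      also have "\<dots> = (\<Sum>u\<in>Pow T. \<Sum>w\<in>Pow (Q - T). (cmod (phi u))\<^sup>2 * (cmod (ch' w))\<^sup>2)"
        by (intro sum.cong refl) (simp add: xi_def qtensor_def disj norm_mult power_mult_distrib)
      also have "\<dots> = (\<Sum>u\<in>Pow T. (cmod (phi u))\<^sup>2) * (\<Sum>w\<in>Pow (Q - T). (cmod (ch' w))\<^sup>2)"
        by (simp add: sum_product)
      also have "\<dots> = 1" using qphi qch unfolding qstate_def by simp
      finally show ?thesis unfolding qstate_def .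
    qed
    have mp: "mp_product Q xi"
      unfolding mp_product_def using Q qphi qch by (auto simp: xi_def)
    have bound: "(cmod (qinner Q a xi))\<^sup>2 \<le> 1 - \<epsilon>\<^sup>2"
      using far qxi mp unfolding eps_far_mp_def by blast
    have "qinner Q a xi = (\<Sum>u\<in>Pow T. \<Sum>w\<in>Pow (Q - T). cnj (a (u \<union> w)) * (phi u * ch' w))"
      unfolding qinner_def by (subst pow_split_sum[OF Q(1) TQ]) (simp add: xi_def qtensor_def disj)
    also have "\<dots> = (\<Sum>u\<in>Pow T. phi u * g u) / of_real (sqrt X)"
      by (simp add: g_def ch'_def sum_distrib_left sum_divide_distrib mult_ac)
    also have "\<dots> = (\<Sum>u\<in>Pow T. of_real ((cmod (g u))\<^sup>2)) / of_real (sqrt G) / of_real (sqrt X)"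
      by (simp add: phi_def sum_divide_distrib mult.commute mult_cnj_sq)
    also have "\<dots> = of_real (G / sqrt G / sqrt X)"
      by (simp add: G_def)
    finally have "cmod (qinner Q a xi) = G / sqrt G / sqrt X" using Gp Xp
      by (simp only: norm_of_real) (simp add: G0 X0)
    also have "G / sqrt G / sqrt X = sqrt (G / X)"
      using G0 by (simp add: real_div_sqrt real_sqrt_divide)
    finally have "(cmod (qinner Q a xi))\<^sup>2 = G / X" using G0 X0 by simp
    with bound have "G / X \<le> 1 - \<epsilon>\<^sup>2" by simp
    then show ?thesis using Xp by (simp add: divide_le_eq)
  qed
  then show ?thesis unfolding G_def X_def g_def .
qed


lemma sw_inter: "sw S x y \<inter> C = sw (S \<inter> C) (x \<inter> C) (y \<inter> C)"
  unfolding sw_def by blast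

lemma wq_tensor:
  assumes N: "finite N" "C \<subseteq> N"
  shows "wq N S (qtensor C (N - C) a b) = wq C (S \<inter> C) a * wq (N - C) (S \<inter> (N - C)) b"
proof -
  define F where "F u u' = cnj (a u) * cnj (a u') * a (sw (S \<inter> C) u u') * a (sw (S \<inter> C) u' u)" for u u'
  define G where "G w w' = cnj (b w) * cnj (b w') * b (sw (S \<inter> (N-C)) w w') * b (sw (S \<inter> (N-C)) w' w)" for w w'
  have dj: "(u \<union> w) \<inter> C = u" "(u \<union> w) \<inter> (N - C) = w" if "u \<in> Pow C" "w \<in> Pow (N - C)" for u w
    using that by auto
  have "wq N S (qtensor C (N - C) a b) = (\<Sum>x\<in>Pow N. \<Sum>y\<in>Pow N. F (x \<inter> C) (y \<inter> C) * G (x \<inter> (N-C)) (y \<inter> (N-C)))"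
    unfolding wq_def qtensor_def F_def G_def by (simp add: sw_inter mult_ac)
  also have "\<dots> = (\<Sum>u\<in>Pow C. \<Sum>w\<in>Pow (N - C). \<Sum>u'\<in>Pow C. \<Sum>w'\<in>Pow (N - C). F u u' * G w w')"
    apply (subst pow_split_sum[OF N, of "\<lambda>x. \<Sum>y\<in>Pow N. F (x \<inter> C) (y \<inter> C) * G (x \<inter> (N-C)) (y \<inter> (N-C))"])
    apply (rule sum.cong[OF refl])+
    subgoal for u w
      apply (subst pow_split_sum[OF N, of "\<lambda>y. F ((u \<union> w) \<inter> C) (y \<inter> C) * G ((u \<union> w) \<inter> (N-C)) (y \<inter> (N-C))"])
      apply (intro sum.cong refl)
      apply (simp add: dj)
      done
    done
  also have "\<dots> = (\<Sum>u\<in>Pow C. \<Sum>u'\<in>Pow C. \<Sum>w\<in>Pow (N - C). \<Sum>w'\<in>Pow (N - C). F u u' * G w w')"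
    by (intro sum.cong refl sum.swap)
  also have "\<dots> = (\<Sum>u\<in>Pow C. \<Sum>u'\<in>Pow C. F u u' * (\<Sum>w\<in>Pow (N - C). \<Sum>w'\<in>Pow (N - C). G w w'))"
    by (simp add: sum_distrib_left)
  also have "\<dots> = (\<Sum>u\<in>Pow C. \<Sum>u'\<in>Pow C. F u u') * (\<Sum>w\<in>Pow (N - C). \<Sum>w'\<in>Pow (N - C). G w w')"
    by (simp add: sum_distrib_right)
  also have "\<dots> = wq C (S \<inter> C) a * wq (N - C) (S \<inter> (N - C)) b"
    unfolding wq_def F_def G_def by simp
  finally show ?thesis .
qed

lemma tensor_norm:
  assumes N: "finite N" "C \<subseteq> N" and qa: "qstate C a" and qb: "qstate (N - C) b"
  shows "qstate N (qtensor C (N - C) a b)"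
proof -
  have dj: "(u \<union> w) \<inter> C = u" "(u \<union> w) \<inter> (N - C) = w" if "u \<in> Pow C" "w \<in> Pow (N - C)" for u w
    using that by auto
  have "(\<Sum>x\<in>Pow N. (cmod (qtensor C (N - C) a b x))\<^sup>2)
     = (\<Sum>u\<in>Pow C. \<Sum>w\<in>Pow (N - C). (cmod (a u))\<^sup>2 * (cmod (b w))\<^sup>2)"
    apply (subst pow_split_sum[OF N])
    apply (intro sum.cong refl)
    apply (simp add: qtensor_def dj norm_mult power_mult_distrib)
    done
  also have "\<dots> = 1" using qa qb unfolding qstate_def by (simp add: sum_product[symmetric])
  finally show ?thesis unfolding qstate_def .
qed

definition purity :: "nat set \<Rightarrow> nat set \<Rightarrow> (nat set \<Rightarrow> complex) \<Rightarrow> real" where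
  "purity Q T a = (\<Sum>u\<in>Pow T. \<Sum>u'\<in>Pow T. (cmod (\<Sum>w\<in>Pow (Q - T). cnj (a (u \<union> w)) * a (u' \<union> w)))\<^sup>2)"

lemma wq_eq_purity: "finite Q \<Longrightarrow> T \<subseteq> Q \<Longrightarrow> wq Q T a = of_real (purity Q T a)"
  unfolding purity_def by (simp add: wq_purity)

lemma purity_nonneg: "purity Q T a \<ge> 0"
  unfolding purity_def by (intro sum_nonneg) auto

lemma purity_le1: "finite Q \<Longrightarrow> T \<subseteq> Q \<Longrightarrow> qstate Q a \<Longrightarrow> purity Q T a \<le> 1"
  unfolding purity_def
  apply (rule purity_bound[where \<Lambda>=1])
    apply assumption+
   apply (simp add: qstate_def)
  apply (rule hyp_one) apply (auto simp: qstate_def)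
  done

lemma purity_far: "finite Q \<Longrightarrow> T \<noteq> {} \<Longrightarrow> T \<subset> Q \<Longrightarrow> qstate Q a \<Longrightarrow> eps_far_mp Q \<epsilon> a
   \<Longrightarrow> 0 \<le> \<epsilon> \<Longrightarrow> \<epsilon> \<le> 1 \<Longrightarrow> purity Q T a \<le> 1 - \<epsilon>\<^sup>2"
  unfolding purity_def
  apply (rule purity_bound[where \<Lambda>="1 - \<epsilon>\<^sup>2"])
    apply auto[2]
   apply (simp add: qstate_def)
  apply (rule hyp_far) apply auto
  done

lemma purity_full: "finite Q \<Longrightarrow> qstate Q a \<Longrightarrow> purity Q Q a = 1"
  unfolding purity_def qstate_def
  by (simp add: norm_mult power_mult_distrib sum_product[symmetric])

lemma purity_empty: "finite Q \<Longrightarrow> qstate Q a \<Longrightarrow> purity Q {} a = 1"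
proof -
  assume q: "qstate Q a"
  have "(\<Sum>w\<in>Pow Q. cnj (a w) * a w) = (\<Sum>w\<in>Pow Q. complex_of_real ((cmod (a w))\<^sup>2))"
    by (intro sum.cong refl) (metis complex_norm_square mult.commute)
  also have "\<dots> = 1" using q unfolding qstate_def by (simp only: of_real_sum[symmetric]) simp
  finally show ?thesis unfolding purity_def by simp
qed

lemma wq_tensor_purity:
  assumes N: "finite N" "C \<subseteq> N"
  shows "wq N S (qtensor C (N - C) a b) = of_real (purity C (S \<inter> C) a * purity (N - C) (S \<inter> (N - C)) b)"
proof -
  have "finite C" "finite (N - C)" using N finite_subset by auto
  then show ?thesis using wq_tensor[OF N] by (simp add: wq_eq_purity)
qed

lemma w_bounds:
  assumes C: "C \<noteq> {}" "C \<subset> N" "finite N" and qa: "qstate C a" and qb: "qstate (N - C) b"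
    and fa: "eps_far_mp C \<epsilon> a" and fb: "eps_far_mp (N - C) \<epsilon> b" and e: "0 \<le> \<epsilon>" "\<epsilon> \<le> 1"
  shows "wq N C (qtensor C (N - C) a b) = 1"
    and "0 \<le> Re (wq N S (qtensor C (N - C) a b))"
    and "S \<noteq> {} \<Longrightarrow> S \<subset> N \<Longrightarrow> S \<noteq> C \<Longrightarrow> S \<noteq> N - C \<Longrightarrow> Re (wq N S (qtensor C (N - C) a b)) \<le> 1 - \<epsilon>\<^sup>2"
proof -
  have CN: "C \<subseteq> N" using C by auto
  have fC: "finite C" "finite (N - C)" using C finite_subset by auto
  note eq = wq_tensor_purity[OF C(3) CN]
  have p1: "0 \<le> purity C (S \<inter> C) a" "purity C (S \<inter> C) a \<le> 1"
    using purity_nonneg purity_le1[OF fC(1) _ qa] by auto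
  have p2: "0 \<le> purity (N - C) (S \<inter> (N - C)) b" "purity (N - C) (S \<inter> (N - C)) b \<le> 1"
    using purity_nonneg purity_le1[OF fC(2) _ qb] by auto
  have "C \<inter> (N - C) = {}" by auto
  then show "wq N C (qtensor C (N - C) a b) = 1"
    using eq[of C] purity_full[OF fC(1) qa] purity_empty[OF fC(2) qb] by (simp add: Int_absorb1)
  show "0 \<le> Re (wq N S (qtensor C (N - C) a b))" using eq[of S] p1 p2 by simp
  assume S: "S \<noteq> {}" "S \<subset> N" "S \<noteq> C" "S \<noteq> N - C"
  have "(S \<inter> C \<noteq> {} \<and> S \<inter> C \<subset> C) \<or> (S \<inter> (N - C) \<noteq> {} \<and> S \<inter> (N - C) \<subset> N - C)"
    using S CN by blast
  then show "Re (wq N S (qtensor C (N - C) a b)) \<le> 1 - \<epsilon>\<^sup>2"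
  proof
    assume h: "S \<inter> C \<noteq> {} \<and> S \<inter> C \<subset> C"
    have "purity C (S \<inter> C) a \<le> 1 - \<epsilon>\<^sup>2" using purity_far[OF fC(1) _ _ qa fa e] h by auto
    then have "purity C (S \<inter> C) a * purity (N - C) (S \<inter> (N - C)) b \<le> (1 - \<epsilon>\<^sup>2) * 1"
      using p1 p2 by (intro mult_mono) auto
    then show ?thesis using eq[of S] by simp
  next
    assume h: "S \<inter> (N - C) \<noteq> {} \<and> S \<inter> (N - C) \<subset> N - C"
    have "purity (N - C) (S \<inter> (N - C)) b \<le> 1 - \<epsilon>\<^sup>2" using purity_far[OF fC(2) _ _ qb fb e] h by auto
    then have "purity C (S \<inter> C) a * purity (N - C) (S \<inter> (N - C)) b \<le> 1 * (1 - \<epsilon>\<^sup>2)"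
      using p1 p2 by (intro mult_mono) auto
    then show ?thesis using eq[of S] by simp
  qed
qed


definition phi1 :: "bool \<Rightarrow> bool \<Rightarrow> bool \<Rightarrow> bool \<Rightarrow> real" where
 "phi1 t u b1 b2 = (if \<not> t then (if b1 = u \<and> b2 = u then 1 else 0)
    else if b1 = b2 then 0 else if u then (if b1 then 1 / sqrt 2 else - 1 / sqrt 2) else 1 / sqrt 2)"

lemma sqrt2_half: "1 / sqrt 2 * (1 / sqrt 2) = (1/2::real)"
  by (simp add: divide_simps)

lemma phi1_kernel:
  "(\<Sum>t\<in>{False,True}. \<Sum>u\<in>{False,True}. (if s \<and> t \<and> u then -1 else 1) * phi1 t u b1 b2 * phi1 t u c1 c2)
   = (if (if s then c1 = b2 \<and> c2 = b1 else c1 = b1 \<and> c2 = b2) then 1 else 0)"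
  by (cases s; cases b1; cases b2; cases c1; cases c2) (simp_all add: phi1_def sqrt2_half)

lemma sum_pow_prod:
  fixes n :: nat and h :: "nat \<Rightarrow> bool \<Rightarrow> 'b::comm_semiring_1"
  shows "(\<Sum>T\<in>Pow {..<n}. \<Prod>j<n. h j (j \<in> T)) = (\<Prod>j<n. h j False + h j True)"
proof (induction n)
  case 0
  then show ?case by simp
next
  case (Suc n)
  have P: "Pow {..<Suc n} = Pow {..<n} \<union> insert n ` Pow {..<n}"
    by (simp add: lessThan_Suc Pow_insert)
  have dis: "Pow {..<n} \<inter> insert n ` Pow {..<n} = {}" by auto
  have inj: "inj_on (insert n) (Pow {..<n})" by (rule inj_onI) auto
  have a: "(\<Prod>j<Suc n. h j (j \<in> T)) = (\<Prod>j<n. h j (j \<in> T)) * h n False" if "T \<in> Pow {..<n}" for T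
  proof -
    have "n \<notin> T" using that by auto
    then show ?thesis by simp
  qed
  have b: "(\<Prod>j<Suc n. h j (j \<in> insert n T)) = (\<Prod>j<n. h j (j \<in> T)) * h n True" if "T \<in> Pow {..<n}" for T
  proof -
    have "(\<Prod>j<n. h j (j \<in> insert n T)) = (\<Prod>j<n. h j (j \<in> T))" by (intro prod.cong) auto
    then show ?thesis by simp
  qed
  have "(\<Sum>T\<in>Pow {..<Suc n}. \<Prod>j<Suc n. h j (j \<in> T))
      = (\<Sum>T\<in>Pow {..<n}. \<Prod>j<Suc n. h j (j \<in> T)) + (\<Sum>T\<in>insert n ` Pow {..<n}. \<Prod>j<Suc n. h j (j \<in> T))"
    unfolding P by (rule sum.union_disjoint) (use dis in auto)
  also have "\<dots> = (\<Sum>T\<in>Pow {..<n}. (\<Prod>j<n. h j (j \<in> T)) * h n False) + (\<Sum>T\<in>Pow {..<n}. (\<Prod>j<n. h j (j \<in> T)) * h n True)"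
  proof -
    have r: "(\<Sum>T\<in>insert n ` Pow {..<n}. \<Prod>j<Suc n. h j (j \<in> T)) = (\<Sum>T\<in>Pow {..<n}. \<Prod>j<Suc n. h j (j \<in> insert n T))"
      using sum.reindex[OF inj, of "\<lambda>T. \<Prod>j<Suc n. h j (j \<in> T)"] by (simp add: comp_def del: prod.lessThan_Suc insert_iff)
    show ?thesis unfolding r
      by (intro arg_cong2[where f="(+)"] sum.cong refl) (use a b in blast)+
  qed
  also have "\<dots> = (\<Prod>j<Suc n. h j False + h j True)"
    by (simp add: Suc.IH sum_distrib_right[symmetric] distrib_left)
  finally show ?case .
qed

lemma prod_indicator:
  "(\<Prod>j\<in>A. (if P j then 1 else 0 :: real)) = (if \<forall>j\<in>A. P j then 1 else 0)" if "finite A"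
  using that by (induction A rule: finite_induct) auto

definition pe :: "nat \<Rightarrow> nat set \<Rightarrow> nat set \<Rightarrow> nat set \<Rightarrow> nat set \<Rightarrow> real" where
  "pe n T U x y = (\<Prod>j<n. phi1 (j \<in> T) (j \<in> U) (j \<in> x) (j \<in> y))"

definition sg :: "nat \<Rightarrow> nat set \<Rightarrow> nat set \<Rightarrow> nat set \<Rightarrow> real" where
  "sg n S T U = (\<Prod>j<n. (if j \<in> S \<and> j \<in> T \<and> j \<in> U then -1 else 1))"

lemma pair_kernel:
  assumes "x \<subseteq> {..<n}" "y \<subseteq> {..<n}" "x' \<subseteq> {..<n}" "y' \<subseteq> {..<n}"
  shows "(\<Sum>T\<in>Pow {..<n}. \<Sum>U\<in>Pow {..<n}. sg n S T U * pe n T U x y * pe n T U x' y')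
     = (if x' = sw S x y \<and> y' = sw S y x then 1 else 0)"
proof -
  define H where "H j t u = (if j \<in> S \<and> t \<and> u then -1 else 1) * phi1 t u (j \<in> x) (j \<in> y) * phi1 t u (j \<in> x') (j \<in> y')" for j t u
  have "(\<Sum>T\<in>Pow {..<n}. \<Sum>U\<in>Pow {..<n}. sg n S T U * pe n T U x y * pe n T U x' y')
     = (\<Sum>T\<in>Pow {..<n}. \<Sum>U\<in>Pow {..<n}. \<Prod>j<n. H j (j \<in> T) (j \<in> U))"
    unfolding sg_def pe_def H_def by (simp add: prod.distrib)
  also have "\<dots> = (\<Sum>T\<in>Pow {..<n}. \<Prod>j<n. H j (j \<in> T) False + H j (j \<in> T) True)"
    by (intro sum.cong refl sum_pow_prod)
  also have "\<dots> = (\<Prod>j<n. (H j False False + H j False True) + (H j True False + H j True True))"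
    by (rule sum_pow_prod)
  also have "\<dots> = (\<Prod>j<n. (if (if j \<in> S then (j \<in> x') = (j \<in> y) \<and> (j \<in> y') = (j \<in> x) else (j \<in> x') = (j \<in> x) \<and> (j \<in> y') = (j \<in> y)) then 1 else 0))"
    apply (intro prod.cong refl)
    subgoal for j using phi1_kernel[of "j \<in> S" "j \<in> x" "j \<in> y" "j \<in> x'" "j \<in> y'"]
      by (simp add: H_def add_ac)
    done
  also have "\<dots> = (if x' = sw S x y \<and> y' = sw S y x then 1 else 0)"
  proof -
    have "(\<forall>j\<in>{..<n}. (if j \<in> S then (j \<in> x') = (j \<in> y) \<and> (j \<in> y') = (j \<in> x) else (j \<in> x') = (j \<in> x) \<and> (j \<in> y') = (j \<in> y)))
       \<longleftrightarrow> x' = sw S x y \<and> y' = sw S y x"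
      using assms unfolding sw_def by (auto; blast)
    then show ?thesis by (simp add: prod_indicator)
  qed
  finally show ?thesis .
qed

lemma sg_empty: "sg n {} T U = 1"
  unfolding sg_def by simp

lemma sg_pm: "sg n S T U = 1 \<or> sg n S T U = -1"
  unfolding sg_def by (induction n) auto


lemma swap2: "(\<Sum>a\<in>A. \<Sum>b\<in>B. \<Sum>c\<in>Cc. f a b c) = (\<Sum>c\<in>Cc. \<Sum>a\<in>A. \<Sum>b\<in>B. f a b c)"
proof -
  have "(\<Sum>a\<in>A. \<Sum>b\<in>B. \<Sum>c\<in>Cc. f a b c) = (\<Sum>a\<in>A. \<Sum>c\<in>Cc. \<Sum>b\<in>B. f a b c)"
    by (rule sum.cong[OF refl], rule sum.swap)
  also have "\<dots> = (\<Sum>c\<in>Cc. \<Sum>a\<in>A. \<Sum>b\<in>B. f a b c)" by (rule sum.swap)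
  finally show ?thesis .
qed

definition pip :: "nat \<Rightarrow> nat set \<Rightarrow> nat set \<Rightarrow> (nat set \<Rightarrow> complex) \<Rightarrow> complex" where
  "pip n T U \<psi> = (\<Sum>x\<in>Pow {..<n}. \<Sum>y\<in>Pow {..<n}. of_real (pe n T U x y) * \<psi> x * \<psi> y)"

lemma sw_sub: "x \<subseteq> N \<Longrightarrow> y \<subseteq> N \<Longrightarrow> sw S x y \<subseteq> N"
  unfolding sw_def by auto

lemma pair_sg_sum:
  "(\<Sum>T\<in>Pow {..<n}. \<Sum>U\<in>Pow {..<n}. of_real (sg n S T U) * of_real ((cmod (pip n T U \<psi>))\<^sup>2))
   = wq {..<n} S \<psi>"
proof -
  let ?P = "Pow {..<n}"
  define c where "c x y x' y' = cnj (\<psi> x) * cnj (\<psi> y) * \<psi> x' * \<psi> y'" for x y x' y'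
  have sq: "of_real ((cmod (pip n T U \<psi>))\<^sup>2) = (\<Sum>x\<in>?P. \<Sum>y\<in>?P. \<Sum>x'\<in>?P. \<Sum>y'\<in>?P.
        c x y x' y' * of_real (pe n T U x y * pe n T U x' y'))" for T U
  proof -
    have "of_real ((cmod (pip n T U \<psi>))\<^sup>2) = cnj (pip n T U \<psi>) * pip n T U \<psi>"
      by (metis complex_norm_square mult.commute)
    also have "\<dots> = (\<Sum>x\<in>?P. \<Sum>y\<in>?P. \<Sum>x'\<in>?P. \<Sum>y'\<in>?P.
        c x y x' y' * of_real (pe n T U x y * pe n T U x' y'))"
      unfolding pip_def c_def
      apply (simp add: sum_product sum_distrib_left sum_distrib_right mult_ac)
      apply (rule sum.cong[OF refl], rule sum.swap)
      done
    finally show ?thesis .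
  qed
  have "(\<Sum>T\<in>?P. \<Sum>U\<in>?P. of_real (sg n S T U) * of_real ((cmod (pip n T U \<psi>))\<^sup>2))
      = (\<Sum>T\<in>?P. \<Sum>U\<in>?P. \<Sum>x\<in>?P. \<Sum>y\<in>?P. \<Sum>x'\<in>?P. \<Sum>y'\<in>?P.
        c x y x' y' * of_real (sg n S T U * pe n T U x y * pe n T U x' y'))"
    unfolding sq by (simp add: sum_distrib_left mult_ac)
  also have "\<dots> = (\<Sum>x\<in>?P. \<Sum>T\<in>?P. \<Sum>U\<in>?P. \<Sum>y\<in>?P. \<Sum>x'\<in>?P. \<Sum>y'\<in>?P.
        c x y x' y' * of_real (sg n S T U * pe n T U x y * pe n T U x' y'))"
    by (rule swap2)
  also have "\<dots> = (\<Sum>x\<in>?P. \<Sum>y\<in>?P. \<Sum>T\<in>?P. \<Sum>U\<in>?P. \<Sum>x'\<in>?P. \<Sum>y'\<in>?P.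
        c x y x' y' * of_real (sg n S T U * pe n T U x y * pe n T U x' y'))"
    by (rule sum.cong[OF refl], rule swap2)
  also have "\<dots> = (\<Sum>x\<in>?P. \<Sum>y\<in>?P. \<Sum>x'\<in>?P. \<Sum>T\<in>?P. \<Sum>U\<in>?P. \<Sum>y'\<in>?P.
        c x y x' y' * of_real (sg n S T U * pe n T U x y * pe n T U x' y'))"
    by (rule sum.cong[OF refl], rule sum.cong[OF refl], rule swap2)
  also have "\<dots> = (\<Sum>x\<in>?P. \<Sum>y\<in>?P. \<Sum>x'\<in>?P. \<Sum>y'\<in>?P. \<Sum>T\<in>?P. \<Sum>U\<in>?P.
        c x y x' y' * of_real (sg n S T U * pe n T U x y * pe n T U x' y'))"
    by (rule sum.cong[OF refl], rule sum.cong[OF refl], rule sum.cong[OF refl], rule swap2)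
  also have "\<dots> = (\<Sum>x\<in>?P. \<Sum>y\<in>?P. \<Sum>x'\<in>?P. \<Sum>y'\<in>?P.
        c x y x' y' * of_real (if x' = sw S x y \<and> y' = sw S y x then 1 else 0))"
    apply (rule sum.cong[OF refl])+
    apply (simp only: sum_distrib_left[symmetric] of_real_sum[symmetric])
    apply (subst pair_kernel)
    apply auto
    done
  also have "\<dots> = (\<Sum>x\<in>?P. \<Sum>y\<in>?P. c x y (sw S x y) (sw S y x))"
  proof (rule sum.cong[OF refl], rule sum.cong[OF refl])
    fix x y assume "x \<in> ?P" "y \<in> ?P"
    then have m: "sw S x y \<in> ?P" "sw S y x \<in> ?P" using sw_sub by auto
    have inner: "(\<Sum>y'\<in>?P. c x y x' y' * of_real (if x' = sw S x y \<and> y' = sw S y x then 1 else 0))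
        = (if x' = sw S x y then c x y x' (sw S y x) else 0)" for x'
    proof (cases "x' = sw S x y")
      case True
      have "(\<Sum>y'\<in>?P. c x y x' y' * of_real (if x' = sw S x y \<and> y' = sw S y x then 1 else 0))
          = (\<Sum>y'\<in>?P. if y' = sw S y x then c x y x' y' else 0)"
        using True by (intro sum.cong refl) simp
      also have "\<dots> = c x y x' (sw S y x)" using m by (simp add: sum.delta)
      finally show ?thesis using True by simp
    qed simp
    have "(\<Sum>x'\<in>?P. \<Sum>y'\<in>?P. c x y x' y' * of_real (if x' = sw S x y \<and> y' = sw S y x then 1 else 0))
        = (\<Sum>x'\<in>?P. if x' = sw S x y then c x y x' (sw S y x) else 0)"
      by (simp only: inner)
    also have "\<dots> = c x y (sw S x y) (sw S y x)"
      using m by (simp add: sum.delta)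
    finally show "(\<Sum>x'\<in>?P. \<Sum>y'\<in>?P. c x y x' y' * of_real (if x' = sw S x y \<and> y' = sw S y x then 1 else 0))
        = c x y (sw S x y) (sw S y x)" .
  qed
  also have "\<dots> = wq {..<n} S \<psi>" unfolding wq_def c_def by simp
  finally show ?thesis .
qed

lemma wq_empty: "(\<Sum>x\<in>Pow N. (cmod (\<psi> x))\<^sup>2) = 1 \<Longrightarrow> wq N {} \<psi> = 1"
proof -
  assume h: "(\<Sum>x\<in>Pow N. (cmod (\<psi> x))\<^sup>2) = 1"
  have "(\<Sum>x\<in>Pow N. cnj (\<psi> x) * \<psi> x) = (\<Sum>x\<in>Pow N. complex_of_real ((cmod (\<psi> x))\<^sup>2))"
    by (intro sum.cong refl) (metis complex_norm_square mult.commute)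
  also have "\<dots> = 1" using h by (simp only: of_real_sum[symmetric]) simp
  finally have s: "(\<Sum>x\<in>Pow N. cnj (\<psi> x) * \<psi> x) = 1" .
  have "wq N {} \<psi> = (\<Sum>x\<in>Pow N. cnj (\<psi> x) * \<psi> x) * (\<Sum>y\<in>Pow N. cnj (\<psi> y) * \<psi> y)"
    unfolding wq_def sw_def by (simp add: sum_product mult_ac)
  then show ?thesis using s by simp
qed

lemma pair_prob:
  assumes nrm: "(\<Sum>x\<in>Pow {..<n}. (cmod (\<psi> x))\<^sup>2) = 1"
  shows "(\<Sum>T\<in>Pow {..<n}. \<Sum>U\<in>Pow {..<n}. if sg n S T U = 1 then (cmod (pip n T U \<psi>))\<^sup>2 else 0)
    = (1 + Re (wq {..<n} S \<psi>)) / 2"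
proof -
  let ?P = "Pow {..<n}"
  have A: "(\<Sum>T\<in>?P. \<Sum>U\<in>?P. sg n S T U * (cmod (pip n T U \<psi>))\<^sup>2) = Re (wq {..<n} S \<psi>)"
    using arg_cong[OF pair_sg_sum[of n S \<psi>], of Re] by (simp add: Re_sum)
  have B: "(\<Sum>T\<in>?P. \<Sum>U\<in>?P. (cmod (pip n T U \<psi>))\<^sup>2) = 1"
    using arg_cong[OF pair_sg_sum[of n "{}" \<psi>], of Re] wq_empty[OF nrm] by (simp add: Re_sum sg_empty)
  have "(\<Sum>T\<in>?P. \<Sum>U\<in>?P. if sg n S T U = 1 then (cmod (pip n T U \<psi>))\<^sup>2 else 0)
      = (\<Sum>T\<in>?P. \<Sum>U\<in>?P. ((cmod (pip n T U \<psi>))\<^sup>2 + sg n S T U * (cmod (pip n T U \<psi>))\<^sup>2) / 2)"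
    apply (intro sum.cong refl)
    subgoal for T U using sg_pm[of n S T U] by auto
    done
  also have "\<dots> = (1 + Re (wq {..<n} S \<psi>)) / 2"
    using A B by (simp add: sum_divide_distrib[symmetric] sum.distrib)
  finally show ?thesis .
qed


datatype lab = Pr "nat set" "nat set" | Cm "nat set"

fun mlabs :: "nat \<Rightarrow> nat \<Rightarrow> lab list set" where
  "mlabs n 0 = {[]}"
| "mlabs n (Suc 0) = (\<lambda>z. [Cm z]) ` Pow {..<n}"
| "mlabs n (Suc (Suc m)) = (\<lambda>(T,U,ls). Pr T U # ls) ` (Pow {..<n} \<times> Pow {..<n} \<times> mlabs n m)"

fun EE :: "nat \<Rightarrow> lab list \<Rightarrow> nat set list \<Rightarrow> real" where
  "EE n [] [] = 1"
| "EE n (Cm z # ls) (x # xs) = (if x = z then 1 else 0) * EE n ls xs"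
| "EE n (Pr T U # ls) (x # y # xs) = pe n T U x y * EE n ls xs"
| "EE n _ _ = 0"

fun consis :: "nat \<Rightarrow> nat set \<Rightarrow> lab list \<Rightarrow> bool" where
  "consis n S [] = True"
| "consis n S (Cm z # ls) = consis n S ls"
| "consis n S (Pr T U # ls) = (sg n S T U = 1 \<and> consis n S ls)"

lemma finite_mlabs: "finite (mlabs n m)"
  by (induction n m rule: mlabs.induct) auto

lemma sum_mlabs2:
  "(\<Sum>L\<in>mlabs n (Suc (Suc m)). f L) = (\<Sum>T\<in>Pow {..<n}. \<Sum>U\<in>Pow {..<n}. \<Sum>ls\<in>mlabs n m. f (Pr T U # ls))"
proof -
  have inj: "inj_on (\<lambda>(T,U,ls). Pr T U # ls) (Pow {..<n} \<times> Pow {..<n} \<times> mlabs n m)"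
    by (auto simp: inj_on_def)
  have "(\<Sum>L\<in>mlabs n (Suc (Suc m)). f L) = sum (f \<circ> (\<lambda>(T,U,ls). Pr T U # ls)) (Pow {..<n} \<times> Pow {..<n} \<times> mlabs n m)"
    by (simp only: mlabs.simps(3) sum.reindex[OF inj])
  also have "\<dots> = (\<Sum>(T,U,ls)\<in>Pow {..<n} \<times> Pow {..<n} \<times> mlabs n m. f (Pr T U # ls))"
    by (simp add: comp_def case_prod_unfold)
  also have "\<dots> = (\<Sum>T\<in>Pow {..<n}. \<Sum>U\<in>Pow {..<n}. \<Sum>ls\<in>mlabs n m. f (Pr T U # ls))"
    by (simp add: sum.cartesian_product[symmetric] finite_mlabs)
  finally show ?thesis .
qed

lemma sum_mlabs1: "(\<Sum>L\<in>mlabs n (Suc 0). f L) = (\<Sum>z\<in>Pow {..<n}. f [Cm z])"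
  by (simp add: sum.reindex inj_on_def)

lemma cb_0: "copies_basis n 0 = {[]}"
  unfolding copies_basis_def by auto

lemma cb_Suc: "copies_basis n (Suc m) = (\<lambda>(x,xs). x # xs) ` (Pow {..<n} \<times> copies_basis n m)"
proof
  show "copies_basis n (Suc m) \<subseteq> (\<lambda>(x,xs). x # xs) ` (Pow {..<n} \<times> copies_basis n m)"
  proof
    fix xs assume "xs \<in> copies_basis n (Suc m)"
    then obtain y ys where "xs = y # ys" "y \<in> Pow {..<n}" "ys \<in> copies_basis n m"
      unfolding copies_basis_def by (cases xs) auto
    then show "xs \<in> (\<lambda>(x,xs). x # xs) ` (Pow {..<n} \<times> copies_basis n m)" by force
  qed
  show "(\<lambda>(x,xs). x # xs) ` (Pow {..<n} \<times> copies_basis n m) \<subseteq> copies_basis n (Suc m)"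
    unfolding copies_basis_def by fastforce
qed

lemma finite_cb: "finite (copies_basis n m)"
  by (induction m) (auto simp: cb_0 cb_Suc)

lemma sum_cb_Suc:
  "(\<Sum>xs\<in>copies_basis n (Suc m). f xs) = (\<Sum>x\<in>Pow {..<n}. \<Sum>xs\<in>copies_basis n m. f (x # xs))"
proof -
  have inj: "inj_on (\<lambda>(x,xs). x # xs) (Pow {..<n} \<times> copies_basis n m)"
    by (auto simp: inj_on_def)
  have "(\<Sum>xs\<in>copies_basis n (Suc m). f xs) = sum (f \<circ> (\<lambda>(x,xs). x # xs)) (Pow {..<n} \<times> copies_basis n m)"
    by (simp only: cb_Suc sum.reindex[OF inj])
  also have "\<dots> = (\<Sum>(x,xs)\<in>Pow {..<n} \<times> copies_basis n m. f (x # xs))"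
    by (simp add: comp_def case_prod_unfold)
  also have "\<dots> = (\<Sum>x\<in>Pow {..<n}. \<Sum>xs\<in>copies_basis n m. f (x # xs))"
    by (simp add: sum.cartesian_product[symmetric] finite_cb)
  finally show ?thesis .
qed

lemma cb_Suc_mem: "x # xs \<in> copies_basis n (Suc m) \<longleftrightarrow> x \<in> Pow {..<n} \<and> xs \<in> copies_basis n m"
  unfolding copies_basis_def by auto

lemma cb_Suc_cases: "xs \<in> copies_basis n (Suc m) \<Longrightarrow> \<exists>y ys. xs = y # ys \<and> y \<in> Pow {..<n} \<and> ys \<in> copies_basis n m"
  unfolding copies_basis_def by (cases xs) auto

lemma completeness:
  "xs \<in> copies_basis n m \<Longrightarrow> ys \<in> copies_basis n m \<Longrightarrow>
    (\<Sum>L\<in>mlabs n m. EE n L xs * EE n L ys) = (if xs = ys then 1 else 0)"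
proof (induction n m arbitrary: xs ys rule: mlabs.induct)
  case (1 n)
  then show ?case by (simp add: cb_0)
next
  case (2 n)
  then obtain x y where "xs = [x]" "ys = [y]" "x \<in> Pow {..<n}" "y \<in> Pow {..<n}"
    by (auto simp: cb_0 dest!: cb_Suc_cases)
  then have "(\<Sum>L\<in>mlabs n (Suc 0). EE n L xs * EE n L ys)
     = (\<Sum>z\<in>Pow {..<n}. if x = z then (if y = z then 1 else 0) else 0)"
    by (simp only: sum_mlabs1) (intro sum.cong refl, simp)
  also have "\<dots> = (if xs = ys then 1 else 0)" using \<open>xs = [x]\<close> \<open>ys = [y]\<close> \<open>x \<in> Pow {..<n}\<close>
    by (simp add: sum.delta')
  finally show ?case .
next
  case (3 n m)
  from "3.prems" obtain x x2 xs' y y2 ys' where e: "xs = x # x2 # xs'" "ys = y # y2 # ys'"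
    and m: "x \<in> Pow {..<n}" "x2 \<in> Pow {..<n}" "y \<in> Pow {..<n}" "y2 \<in> Pow {..<n}"
      "xs' \<in> copies_basis n m" "ys' \<in> copies_basis n m"
    by (auto dest!: cb_Suc_cases)
  have k: "(\<Sum>T\<in>Pow {..<n}. \<Sum>U\<in>Pow {..<n}. pe n T U x x2 * pe n T U y y2) = (if y = x \<and> y2 = x2 then 1 else 0)"
    using pair_kernel[of x n x2 y y2 "{}"] m by (simp add: sg_empty sw_def)
  have "(\<Sum>L\<in>mlabs n (Suc (Suc m)). EE n L xs * EE n L ys)
     = (\<Sum>T\<in>Pow {..<n}. \<Sum>U\<in>Pow {..<n}. \<Sum>ls\<in>mlabs n m. (pe n T U x x2 * pe n T U y y2) * (EE n ls xs' * EE n ls ys'))"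
    unfolding sum_mlabs2 e by (simp add: mult_ac)
  also have "\<dots> = (\<Sum>T\<in>Pow {..<n}. \<Sum>U\<in>Pow {..<n}. (pe n T U x x2 * pe n T U y y2) * (\<Sum>ls\<in>mlabs n m. EE n ls xs' * EE n ls ys'))"
    by (simp only: sum_distrib_left)
  also have "\<dots> = (\<Sum>T\<in>Pow {..<n}. \<Sum>U\<in>Pow {..<n}. pe n T U x x2 * pe n T U y y2) * (\<Sum>ls\<in>mlabs n m. EE n ls xs' * EE n ls ys')"
    by (simp only: sum_distrib_right)
  also have "\<dots> = (if xs = ys then 1 else 0)"
    unfolding k "3.IH"[OF m(5,6)] e by auto
  finally show ?case .
qed

definition ip :: "nat \<Rightarrow> nat \<Rightarrow> lab list \<Rightarrow> (nat set list \<Rightarrow> complex) \<Rightarrow> complex" where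
  "ip n m L v = (\<Sum>xs\<in>copies_basis n m. of_real (EE n L xs) * v xs)"

lemma tp_Cons: "tensor_pow \<psi> (x # xs) = \<psi> x * tensor_pow \<psi> xs"
  unfolding tensor_pow_def by simp

lemma ip_Pr:
  "ip n (Suc (Suc m)) (Pr T U # ls) (tensor_pow \<psi>) = pip n T U \<psi> * ip n m ls (tensor_pow \<psi>)"
  unfolding ip_def pip_def
  by (simp add: sum_cb_Suc tp_Cons sum_distrib_left sum_distrib_right mult_ac)

lemma ip_Cm:
  "z \<in> Pow {..<n} \<Longrightarrow> ip n (Suc 0) [Cm z] (tensor_pow \<psi>) = \<psi> z"
proof -
  assume z: "z \<in> Pow {..<n}"
  have "ip n (Suc 0) [Cm z] (tensor_pow \<psi>) = (\<Sum>x\<in>Pow {..<n}. \<Sum>xs\<in>{[]}. of_real (EE n [Cm z] (x#xs)) * tensor_pow \<psi> (x#xs))"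
    unfolding ip_def by (simp only: sum_cb_Suc cb_0)
  also have "\<dots> = (\<Sum>x\<in>Pow {..<n}. of_real (if x = z then 1 else 0) * \<psi> x)"
    by (simp add: tensor_pow_def)
  also have "\<dots> = (\<Sum>x\<in>Pow {..<n}. if x = z then \<psi> x else 0)"
    by (intro sum.cong refl) simp
  also have "\<dots> = \<psi> z" using z by (simp add: sum.delta)
  finally show ?thesis .
qed

lemma ip_Nil: "ip n 0 [] (tensor_pow \<psi>) = 1"
  unfolding ip_def by (simp add: cb_0 tensor_pow_def)

lemma prob_consis:
  assumes nrm: "(\<Sum>x\<in>Pow {..<n}. (cmod (\<psi> x))\<^sup>2) = 1"
  shows "(\<Sum>L\<in>mlabs n m. if consis n S L then (cmod (ip n m L (tensor_pow \<psi>)))\<^sup>2 else 0)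
     = ((1 + Re (wq {..<n} S \<psi>)) / 2) ^ (m div 2)"
  using nrm
proof (induction n m rule: mlabs.induct)
  case (1 n)
  then show ?case by (simp add: ip_Nil)
next
  case (2 n)
  have "(\<Sum>L\<in>mlabs n (Suc 0). if consis n S L then (cmod (ip n (Suc 0) L (tensor_pow \<psi>)))\<^sup>2 else 0)
     = (\<Sum>z\<in>Pow {..<n}. (cmod (\<psi> z))\<^sup>2)"
    by (simp only: sum_mlabs1) (intro sum.cong refl, simp add: ip_Cm)
  then show ?case using "2.prems" by simp
next
  case (3 n m)
  let ?A = "\<lambda>T U. if sg n S T U = 1 then (cmod (pip n T U \<psi>))\<^sup>2 else 0"
  let ?B = "\<lambda>ls. if consis n S ls then (cmod (ip n m ls (tensor_pow \<psi>)))\<^sup>2 else 0"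
  have "(\<Sum>L\<in>mlabs n (Suc (Suc m)). if consis n S L then (cmod (ip n (Suc (Suc m)) L (tensor_pow \<psi>)))\<^sup>2 else 0)
     = (\<Sum>T\<in>Pow {..<n}. \<Sum>U\<in>Pow {..<n}. \<Sum>ls\<in>mlabs n m. ?A T U * ?B ls)"
    by (simp only: sum_mlabs2) (intro sum.cong refl, simp add: ip_Pr norm_mult power_mult_distrib)
  also have "\<dots> = (\<Sum>T\<in>Pow {..<n}. \<Sum>U\<in>Pow {..<n}. ?A T U * (\<Sum>ls\<in>mlabs n m. ?B ls))"
    by (simp only: sum_distrib_left)
  also have "\<dots> = (\<Sum>T\<in>Pow {..<n}. \<Sum>U\<in>Pow {..<n}. ?A T U) * (\<Sum>ls\<in>mlabs n m. ?B ls)"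
    by (simp only: sum_distrib_right)
  also have "\<dots> = ((1 + Re (wq {..<n} S \<psi>)) / 2) ^ (Suc (Suc m) div 2)"
    using pair_prob[OF "3.prems", of S] "3.IH"[OF "3.prems"] by simp
  finally show ?case .
qed


definition fout :: "nat \<Rightarrow> lab list \<Rightarrow> nat set" where
  "fout n L = (if \<exists>S. S \<noteq> {} \<and> S \<subset> {..<n} \<and> consis n S L
      then (SOME S. S \<noteq> {} \<and> S \<subset> {..<n} \<and> consis n S L) else {})"

definition Mo :: "nat \<Rightarrow> nat \<Rightarrow> nat set \<Rightarrow> nat set list \<Rightarrow> nat set list \<Rightarrow> complex" where
  "Mo n m oc x y = (\<Sum>L\<in>{L\<in>mlabs n m. fout n L = oc}. of_real (EE n L x * EE n L y))"

lemma fout_Pow: "fout n L \<in> Pow {..<n}"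
proof (cases "\<exists>S. S \<noteq> {} \<and> S \<subset> {..<n} \<and> consis n S L")
  case True
  then have "(SOME S. S \<noteq> {} \<and> S \<subset> {..<n} \<and> consis n S L) \<noteq> {} \<and> (SOME S. S \<noteq> {} \<and> S \<subset> {..<n} \<and> consis n S L) \<subset> {..<n}
      \<and> consis n (SOME S. S \<noteq> {} \<and> S \<subset> {..<n} \<and> consis n S L) L"
    by (rule someI_ex)
  then show ?thesis using True unfolding fout_def by auto
next
  case False
  then show ?thesis unfolding fout_def by (simp only: if_False) simp
qed

lemma fout_prop: "S \<noteq> {} \<Longrightarrow> S \<subset> {..<n} \<Longrightarrow> consis n S L \<Longrightarrow>
   fout n L \<noteq> {} \<and> fout n L \<subset> {..<n} \<and> consis n (fout n L) L"
proof -
  assume "S \<noteq> {}" "S \<subset> {..<n}" "consis n S L"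
  then have ex: "\<exists>S. S \<noteq> {} \<and> S \<subset> {..<n} \<and> consis n S L" by blast
  then have "(SOME S. S \<noteq> {} \<and> S \<subset> {..<n} \<and> consis n S L) \<noteq> {} \<and> (SOME S. S \<noteq> {} \<and> S \<subset> {..<n} \<and> consis n S L) \<subset> {..<n}
      \<and> consis n (SOME S. S \<noteq> {} \<and> S \<subset> {..<n} \<and> consis n S L) L"
    by (rule someI_ex)
  then show ?thesis using ex unfolding fout_def by simp
qed

lemma qform_Mo:
  "qform (copies_basis n m) (Mo n m oc) v = of_real (\<Sum>L\<in>{L\<in>mlabs n m. fout n L = oc}. (cmod (ip n m L v))\<^sup>2)"
proof -
  let ?B = "copies_basis n m" and ?F = "{L\<in>mlabs n m. fout n L = oc}"
  have fin: "finite ?F" using finite_mlabs by simp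
  have "qform ?B (Mo n m oc) v = (\<Sum>x\<in>?B. \<Sum>y\<in>?B. \<Sum>L\<in>?F. (cnj (v x) * of_real (EE n L x)) * (of_real (EE n L y) * v y))"
    unfolding qform_def Mo_def by (simp add: sum_distrib_left sum_distrib_right mult_ac)
  also have "\<dots> = (\<Sum>L\<in>?F. (\<Sum>x\<in>?B. cnj (v x) * of_real (EE n L x)) * (\<Sum>y\<in>?B. of_real (EE n L y) * v y))"
  proof -
    have "(\<Sum>x\<in>?B. \<Sum>y\<in>?B. \<Sum>L\<in>?F. (cnj (v x) * of_real (EE n L x)) * (of_real (EE n L y) * v y))
        = (\<Sum>x\<in>?B. \<Sum>L\<in>?F. \<Sum>y\<in>?B. (cnj (v x) * of_real (EE n L x)) * (of_real (EE n L y) * v y))"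
      by (rule sum.cong[OF refl], rule sum.swap)
    also have "\<dots> = (\<Sum>L\<in>?F. \<Sum>x\<in>?B. \<Sum>y\<in>?B. (cnj (v x) * of_real (EE n L x)) * (of_real (EE n L y) * v y))"
      by (rule sum.swap)
    also have "\<dots> = (\<Sum>L\<in>?F. (\<Sum>x\<in>?B. cnj (v x) * of_real (EE n L x)) * (\<Sum>y\<in>?B. of_real (EE n L y) * v y))"
      by (simp only: sum_product)
    finally show ?thesis .
  qed
  also have "\<dots> = (\<Sum>L\<in>?F. of_real ((cmod (ip n m L v))\<^sup>2))"
  proof (rule sum.cong[OF refl])
    fix L
    have "(\<Sum>x\<in>?B. cnj (v x) * of_real (EE n L x)) = cnj (ip n m L v)"
      unfolding ip_def by (simp add: mult.commute)
    then show "(\<Sum>x\<in>?B. cnj (v x) * of_real (EE n L x)) * (\<Sum>y\<in>?B. of_real (EE n L y) * v y) = of_real ((cmod (ip n m L v))\<^sup>2)"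
      unfolding ip_def[symmetric] by (metis complex_norm_square mult.commute)
  qed
  also have "\<dots> = of_real (\<Sum>L\<in>?F. (cmod (ip n m L v))\<^sup>2)" by simp
  finally show ?thesis .
qed

lemma povm: "is_povm (copies_basis n m) (Pow {..<n}) (Mo n m)"
  unfolding is_povm_def
proof (intro conjI ballI)
  fix oc
  show "psd_op (copies_basis n m) (Mo n m oc)"
    unfolding psd_op_def qform_Mo by (simp add: sum_nonneg)
next
  fix x y assume xy: "x \<in> copies_basis n m" "y \<in> copies_basis n m"
  have "(\<Sum>oc\<in>Pow {..<n}. Mo n m oc x y) = (\<Sum>L\<in>mlabs n m. of_real (EE n L x * EE n L y))"
    unfolding Mo_def
    by (rule sum.group) (use fout_Pow finite_mlabs in blast)+
  also have "\<dots> = of_real (\<Sum>L\<in>mlabs n m. EE n L x * EE n L y)" by simp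
  also have "\<dots> = (if x = y then 1 else 0)" using completeness[OF xy] by simp
  finally show "(\<Sum>oc\<in>Pow {..<n}. Mo n m oc x y) = (if x = y then 1 else 0)" .
qed


lemma consis_empty: "consis n {} L"
  by (induction n "{}::nat set" L rule: consis.induct) (auto simp: sg_empty)

definition pr :: "nat \<Rightarrow> nat \<Rightarrow> (nat set \<Rightarrow> complex) \<Rightarrow> lab list \<Rightarrow> real" where
  "pr n m \<psi> L = (cmod (ip n m L (tensor_pow \<psi>)))\<^sup>2"

lemma total_pr:
  assumes nrm: "(\<Sum>x\<in>Pow {..<n}. (cmod (\<psi> x))\<^sup>2) = 1"
  shows "(\<Sum>L\<in>mlabs n m. pr n m \<psi> L) = 1"
  using prob_consis[OF nrm, of "{}" m] wq_empty[OF nrm] by (simp add: consis_empty pr_def)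

lemma success_bound:
  assumes C: "C \<noteq> {}" "C \<subset> {..<n}" and qa: "qstate C a" and qb: "qstate ({..<n} - C) b"
    and fa: "eps_far_mp C \<epsilon> a" and fb: "eps_far_mp ({..<n} - C) \<epsilon> b" and e: "0 \<le> \<epsilon>" "\<epsilon> \<le> 1"
  defines "\<psi> \<equiv> qtensor C ({..<n} - C) a b"
  shows "Re (qform (copies_basis n m) (Mo n m C) (tensor_pow \<psi>))
       + Re (qform (copies_basis n m) (Mo n m ({..<n} - C)) (tensor_pow \<psi>))
       \<ge> 1 - 2 ^ n * (1 - \<epsilon>\<^sup>2 / 2) ^ (m div 2)"
proof -
  let ?N = "{..<n}" and ?p = "m div 2"
  let ?W = "{S\<in>Pow ?N. S \<noteq> {} \<and> S \<subset> ?N \<and> S \<noteq> C \<and> S \<noteq> ?N - C}"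
  let ?pi = "pr n m \<psi>"
  have CN: "C \<subseteq> ?N" using C by auto
  have qpsi: "qstate ?N \<psi>" unfolding \<psi>_def by (rule tensor_norm[OF _ CN qa qb]) simp
  then have nrm: "(\<Sum>x\<in>Pow ?N. (cmod (\<psi> x))\<^sup>2) = 1" unfolding qstate_def .
  note wb = w_bounds[OF C(1,2) _ qa qb fa fb e, unfolded \<psi>_def[symmetric], simplified]
  have CC: "C \<noteq> ?N - C" using C by auto
  have pi0: "?pi L \<ge> 0" for L unfolding pr_def by simp
  have fin: "finite (mlabs n m)" by (rule finite_mlabs)
  have finW: "finite ?W" by simp
  have succ: "Re (qform (copies_basis n m) (Mo n m C) (tensor_pow \<psi>))
       + Re (qform (copies_basis n m) (Mo n m (?N - C)) (tensor_pow \<psi>))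
       = (\<Sum>L\<in>mlabs n m. if fout n L = C \<or> fout n L = ?N - C then ?pi L else 0)"
  proof -
    have "Re (qform (copies_basis n m) (Mo n m C) (tensor_pow \<psi>)) = (\<Sum>L\<in>mlabs n m. if fout n L = C then ?pi L else 0)"
      unfolding qform_Mo pr_def by (simp add: sum.inter_filter[OF fin])
    moreover have "Re (qform (copies_basis n m) (Mo n m (?N - C)) (tensor_pow \<psi>)) = (\<Sum>L\<in>mlabs n m. if fout n L = ?N - C then ?pi L else 0)"
      unfolding qform_Mo pr_def by (simp add: sum.inter_filter[OF fin])
    ultimately show ?thesis using CC by (simp add: sum.distrib[symmetric]) (intro sum.cong refl, auto)
  qed
  have pw: "?pi L \<le> (if fout n L = C \<or> fout n L = ?N - C then ?pi L else 0)
      + (if consis n C L then 0 else ?pi L) + (\<Sum>S\<in>?W. if consis n S L then ?pi L else 0)"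
    if L: "L \<in> mlabs n m" for L
  proof (cases "consis n C L")
    case cC: True
    note fp = fout_prop[OF C cC]
    show ?thesis
    proof (cases "fout n L = C \<or> fout n L = ?N - C")
      case True
      then show ?thesis using pi0[of L] by (simp add: sum_nonneg)
    next
      case False
      then have "fout n L \<in> ?W" using fp by auto
      then have "(if consis n (fout n L) L then ?pi L else 0) \<le> (\<Sum>S\<in>?W. if consis n S L then ?pi L else 0)"
        by (intro member_le_sum finW) (auto simp: pi0)
      then show ?thesis using fp False cC by simp
    qed
  next
    case False
    then show ?thesis using pi0[of L] by (simp add: sum_nonneg)
  qed
  have "1 = (\<Sum>L\<in>mlabs n m. ?pi L)" using total_pr[OF nrm] by simp
  also have "\<dots> \<le> (\<Sum>L\<in>mlabs n m. (if fout n L = C \<or> fout n L = ?N - C then ?pi L else 0)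
      + (if consis n C L then 0 else ?pi L) + (\<Sum>S\<in>?W. if consis n S L then ?pi L else 0))"
    by (rule sum_mono) (rule pw)
  also have "\<dots> = (\<Sum>L\<in>mlabs n m. if fout n L = C \<or> fout n L = ?N - C then ?pi L else 0)
      + (\<Sum>L\<in>mlabs n m. if consis n C L then 0 else ?pi L)
      + (\<Sum>S\<in>?W. \<Sum>L\<in>mlabs n m. if consis n S L then ?pi L else 0)"
    by (simp add: sum.distrib) (rule sum.swap)
  finally have main: "1 \<le> (\<Sum>L\<in>mlabs n m. if fout n L = C \<or> fout n L = ?N - C then ?pi L else 0)
      + (\<Sum>L\<in>mlabs n m. if consis n C L then 0 else ?pi L)
      + (\<Sum>S\<in>?W. \<Sum>L\<in>mlabs n m. if consis n S L then ?pi L else 0)" .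
  have consS: "(\<Sum>L\<in>mlabs n m. if consis n S L then ?pi L else 0) = ((1 + Re (wq ?N S \<psi>)) / 2) ^ ?p" for S
    using prob_consis[OF nrm, of S m] unfolding pr_def by simp
  have bad0: "(\<Sum>L\<in>mlabs n m. if consis n C L then 0 else ?pi L) = 0"
  proof -
    have "(\<Sum>L\<in>mlabs n m. if consis n C L then 0 else ?pi L) = (\<Sum>L\<in>mlabs n m. ?pi L) - (\<Sum>L\<in>mlabs n m. if consis n C L then ?pi L else 0)"
      by (simp add: sum_subtractf[symmetric]) (intro sum.cong refl, auto)
    also have "\<dots> = 0" using total_pr[OF nrm] consS[of C] wb(1) by simp
    finally show ?thesis .
  qed
  have wrong: "(\<Sum>S\<in>?W. \<Sum>L\<in>mlabs n m. if consis n S L then ?pi L else 0) \<le> 2 ^ n * (1 - \<epsilon>\<^sup>2 / 2) ^ ?p"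
  proof -
    have "(\<Sum>S\<in>?W. \<Sum>L\<in>mlabs n m. if consis n S L then ?pi L else 0) \<le> (\<Sum>S\<in>?W. (1 - \<epsilon>\<^sup>2 / 2) ^ ?p)"
    proof (rule sum_mono)
      fix S assume S: "S \<in> ?W"
      have "0 \<le> Re (wq ?N S \<psi>)" by (rule wb(2))
      moreover have "Re (wq ?N S \<psi>) \<le> 1 - \<epsilon>\<^sup>2" using S wb(3)[of S] by auto
      ultimately have "(1 + Re (wq ?N S \<psi>)) / 2 \<le> 1 - \<epsilon>\<^sup>2 / 2" "0 \<le> (1 + Re (wq ?N S \<psi>)) / 2" by auto
      then show "(\<Sum>L\<in>mlabs n m. if consis n S L then ?pi L else 0) \<le> (1 - \<epsilon>\<^sup>2 / 2) ^ ?p"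
        unfolding consS by (intro power_mono) auto
    qed
    also have "\<dots> = real (card ?W) * (1 - \<epsilon>\<^sup>2 / 2) ^ ?p" by simp
    also have "\<dots> \<le> 2 ^ n * (1 - \<epsilon>\<^sup>2 / 2) ^ ?p"
    proof (rule mult_right_mono)
      have "card ?W \<le> card (Pow ?N)" by (intro card_mono) auto
      also have "\<dots> = 2 ^ n" by (simp add: card_Pow)
      finally show "real (card ?W) \<le> 2 ^ n" by (simp add: of_nat_le_iff[symmetric] del: of_nat_le_iff)
      have "\<epsilon>\<^sup>2 \<le> 1" using e power_le_one[of \<epsilon> 2] by simp
      then show "0 \<le> (1 - \<epsilon>\<^sup>2 / 2) ^ ?p" by simp
    qed
    finally show ?thesis .
  qed
  show ?thesis using main bad0 wrong succ by linarith
qed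


lemma numeric:
  fixes n m :: nat and \<epsilon> :: real
  assumes e: "0 < \<epsilon>" "\<epsilon> \<le> 1" and n: "n \<ge> 1" and m: "real m \<ge> 800 * real n / \<epsilon>\<^sup>2"
  shows "2 ^ n * (1 - \<epsilon>\<^sup>2 / 2) ^ (m div 2) \<le> 1 / 100"
proof -
  define d where "d = \<epsilon>\<^sup>2 / 2"
  define p where "p = m div 2"
  have e2: "0 < \<epsilon>\<^sup>2" "\<epsilon>\<^sup>2 \<le> 1" using e power_le_one[of \<epsilon> 2] by auto
  have d: "0 < d" "d \<le> 1/2" using e2 unfolding d_def by auto
  have "m \<le> 2 * (m div 2) + 1" by linarith
  then have "real m \<le> 2 * real (m div 2) + 1" by linarith
  then have pm: "real p \<ge> (real m - 1) / 2" unfolding p_def by (simp add: field_simps)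
  have em: "\<epsilon>\<^sup>2 * real m \<ge> 800 * real n" using m e2 by (simp add: divide_le_eq mult.commute)
  have "d * real p \<ge> d * ((real m - 1) / 2)" using pm d by (intro mult_left_mono) auto
  moreover have "d * ((real m - 1) / 2) = (\<epsilon>\<^sup>2 * real m - \<epsilon>\<^sup>2) / 4" unfolding d_def by (simp add: field_simps)
  moreover have "(\<epsilon>\<^sup>2 * real m - \<epsilon>\<^sup>2) / 4 \<ge> (800 * real n - 1) / 4"
    using em e2 by (intro divide_right_mono) auto
  ultimately have dp: "d * real p \<ge> (800 * real n - 1) / 4" by linarith
  have "(1 - d) ^ p \<le> exp (- d) ^ p"
    using d by (intro power_mono) (auto simp: exp_ge_add_one_self[of "-d", simplified])
  moreover have "exp (- d) ^ p = exp (- (d * real p))"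
    by (simp add: exp_of_nat_mult[symmetric] mult.commute)
  ultimately have A: "(1 - d) ^ p \<le> exp (- (d * real p))" by simp
  have "(2::real) ^ n \<le> exp 1 ^ n"
    using exp_ge_add_one_self[of 1] by (intro power_mono) auto
  also have "\<dots> = exp (real n)" by (simp add: exp_of_nat_mult[symmetric])
  finally have B: "(2::real) ^ n \<le> exp (real n)" .
  have "2 ^ n * (1 - d) ^ p \<le> exp (real n) * exp (- (d * real p))"
    using A B d by (intro mult_mono) auto
  also have "\<dots> = exp (real n - d * real p)" by (simp add: exp_add[symmetric])
  also have "\<dots> \<le> exp (- 198)"
    using dp n by simp
  also have "\<dots> \<le> 1 / 100"
  proof -
    have "exp (198::real) \<ge> 100" using exp_ge_add_one_self[of 198] by simp
    then show ?thesis by (simp add: exp_minus field_simps)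
  qed
  finally show ?thesis unfolding d_def p_def .
qed


theorem theorem2p21:
  shows "\<exists>K::real. K > 0 \<and>
    (\<forall>(n::nat) (\<epsilon>::real) (m::nat). 0 < \<epsilon> \<and> \<epsilon> \<le> 1 \<and> real m \<ge> K * real n / \<epsilon>\<^sup>2 \<longrightarrow>
      (\<exists>M :: nat set \<Rightarrow> nat set list \<Rightarrow> nat set list \<Rightarrow> complex.
         is_povm (copies_basis n m) (Pow {..<n}) M \<and>
         (\<forall>C a b. C \<noteq> {} \<and> C \<subset> {..<n} \<and>
             qstate C a \<and> qstate ({..<n} - C) b \<and>
             eps_far_mp C \<epsilon> a \<and> eps_far_mp ({..<n} - C) \<epsilon> b \<longrightarrow>
             (let \<psi> = qtensor C ({..<n} - C) a b in
               Re (qform (copies_basis n m) (M C) (tensor_pow \<psi>))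
             + Re (qform (copies_basis n m) (M ({..<n} - C)) (tensor_pow \<psi>)) \<ge> 99 / 100))))"
  proof (intro exI[of _ 800] conjI allI impI)
  show "(800::real) > 0" by simp
  fix n :: nat and \<epsilon> :: real and m :: nat
  assume h: "0 < \<epsilon> \<and> \<epsilon> \<le> 1 \<and> real m \<ge> 800 * real n / \<epsilon>\<^sup>2"
  show "\<exists>M :: nat set \<Rightarrow> nat set list \<Rightarrow> nat set list \<Rightarrow> complex.
         is_povm (copies_basis n m) (Pow {..<n}) M \<and>
         (\<forall>C a b. C \<noteq> {} \<and> C \<subset> {..<n} \<and>
             qstate C a \<and> qstate ({..<n} - C) b \<and>
             eps_far_mp C \<epsilon> a \<and> eps_far_mp ({..<n} - C) \<epsilon> b \<longrightarrow>
             (let \<psi> = qtensor C ({..<n} - C) a b in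
               Re (qform (copies_basis n m) (M C) (tensor_pow \<psi>))
             + Re (qform (copies_basis n m) (M ({..<n} - C)) (tensor_pow \<psi>)) \<ge> 99 / 100))"
  proof (intro exI[of _ "Mo n m"] conjI allI impI)
    show "is_povm (copies_basis n m) (Pow {..<n}) (Mo n m)" by (rule povm)
    fix C a b
    assume H: "C \<noteq> {} \<and> C \<subset> {..<n} \<and>
             qstate C a \<and> qstate ({..<n} - C) b \<and>
             eps_far_mp C \<epsilon> a \<and> eps_far_mp ({..<n} - C) \<epsilon> b"
    have n1: "n \<ge> 1"
    proof (rule ccontr)
      assume "\<not> n \<ge> 1"
      then have "{..<n} = ({}::nat set)" by auto
      then show False using H by auto
    qed
    have s: "Re (qform (copies_basis n m) (Mo n m C) (tensor_pow (qtensor C ({..<n} - C) a b)))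
       + Re (qform (copies_basis n m) (Mo n m ({..<n} - C)) (tensor_pow (qtensor C ({..<n} - C) a b)))
       \<ge> 1 - 2 ^ n * (1 - \<epsilon>\<^sup>2 / 2) ^ (m div 2)"
      using H h by (intro success_bound) auto
    have "2 ^ n * (1 - \<epsilon>\<^sup>2 / 2) ^ (m div 2) \<le> 1 / 100"
      using h n1 by (intro numeric) auto
    then show "let \<psi> = qtensor C ({..<n} - C) a b in
               Re (qform (copies_basis n m) (Mo n m C) (tensor_pow \<psi>))
             + Re (qform (copies_basis n m) (Mo n m ({..<n} - C)) (tensor_pow \<psi>)) \<ge> 99 / 100"
      using s unfolding Let_def by linarith
  qed
qed

end
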